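(* Let $q=p^m$ with $p$ prime, $3\le k\le n\le q$, $\alpha=(\alpha_1,\dots,\alpha_n)\in\mathbb{F}_q^n$ with pairwise distinct entries, $v\in(\mathbb{F}_q^* )^n$, $\eta\in\mathbb{F}_q^*$, $\delta\in\mathbb{F}_q$, and let $\mathcal{C}$ be the code of length $n+3$ defined in the context. If $3\le k\le n-4$, then $\mathcal{C}$ is of non-GRS type, i.e. it is not monomially equivalent to any generalized Reed–Solomon code.
   Context: Let $\mathcal{S}=\{f(x)=\sum_{i=0}^{k-1}f_ix^i+\eta f_{k-1}x^{k+2}:f_i\in\mathbb{F}_q\}$ and $\mathcal{C}=\{(v_1f(\alpha_1),\dots,v_nf(\alpha_n),f_{k-1},f_{k-2},f_{k-3}+\delta f_{k-1}):f\in\mathcal{S}\}\subseteq\mathbb{F}_q^{n+3}$, where $f_j$ is the coefficient of $x^j$ ($j\le k-1$). A generalized Reed–Solomon (GRS) code of length $N$ and dimension $k$ is $\{(w_1g(\beta_1),\dots,w_Ng(\beta_N)):g\in\mathbb{F}_q[x],\deg g<k\}$ for pairwise distinct $\beta_i\in\mathbb{F}_q$ and $w_i\in\mathbb{F}_q^*$. Two codes of the same length are monomially equivalent if $GM$ generates the second code for some generator matrix $G$ of the first and some monomial matrix $M$. *)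

theory Defs
  imports "HOL-Computational_Algebra.Polynomial" "HOL-Combinatorics.Permutations"
begin

definition GRS_code :: "nat \<Rightarrow> nat \<Rightarrow> (nat \<Rightarrow> 'a::field) \<Rightarrow> (nat \<Rightarrow> 'a) \<Rightarrow> 'a list set" where
  "GRS_code N k beta w =
     {map (\<lambda>i. w i * poly g (beta i)) [0..<N] | g. g = 0 \<or> degree g < k}"

definition is_GRS_code :: "nat \<Rightarrow> nat \<Rightarrow> 'a::field list set \<Rightarrow> bool" where
  "is_GRS_code N k D \<longleftrightarrow>
     (\<exists>beta w. inj_on beta {..<N} \<and> (\<forall>i<N. w i \<noteq> 0) \<and> D = GRS_code N k beta w)"

text \<open>Action of a monomial matrix M (permutation sigma, nonzero scalars lam) on a row vector:
  (c M)_j = lam_j * c_{sigma j}.\<close>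
definition monomial_act :: "nat \<Rightarrow> (nat \<Rightarrow> nat) \<Rightarrow> (nat \<Rightarrow> 'a::field) \<Rightarrow> 'a list \<Rightarrow> 'a list" where
  "monomial_act N sigma lam c = map (\<lambda>j. lam j * c ! sigma j) [0..<N]"

text \<open>Monomial equivalence of two codes of length N: the second is the image of the first
  under a monomial matrix (GM generates D iff D = {cM | c in C}).\<close>
definition monomially_equivalent :: "nat \<Rightarrow> 'a::field list set \<Rightarrow> 'a list set \<Rightarrow> bool" where
  "monomially_equivalent N C D \<longleftrightarrow>
     (\<exists>sigma lam. sigma permutes {..<N} \<and> (\<forall>j<N. lam j \<noteq> 0) \<and>
        D = monomial_act N sigma lam ` C)"

definition S_poly :: "nat \<Rightarrow> 'a::field \<Rightarrow> (nat \<Rightarrow> 'a) \<Rightarrow> 'a poly" where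
  "S_poly k eta fc = (\<Sum>i<k. monom (fc i) i) + monom (eta * fc (k - 1)) (k + 2)"

definition code_C :: "nat \<Rightarrow> nat \<Rightarrow> (nat \<Rightarrow> 'a::field) \<Rightarrow> (nat \<Rightarrow> 'a) \<Rightarrow> 'a \<Rightarrow> 'a \<Rightarrow> 'a list set" where
  "code_C n k alpha v eta delta =
     {map (\<lambda>i. v i * poly (S_poly k eta fc) (alpha i)) [0..<n]
        @ [fc (k - 1), fc (k - 2), fc (k - 3) + delta * fc (k - 1)] | fc. True}"

end

theory Submission
  imports Defs
begin

lemma prod_form:
  fixes g :: "'a::field poly"
  assumes "finite Z" "degree g \<le> card Z" "\<forall>z\<in>Z. poly g z = 0"
  shows "g = smult (coeff g (card Z)) (\<Prod>z\<in>Z. [:-z,1:])"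
proof -
  have d: "degree (\<Prod>z\<in>Z. [:-z,1:]) = card Z"
    by (subst degree_prod_eq_sum_degree) auto
  have l: "lead_coeff (\<Prod>z\<in>Z. [:-z,1:]) = 1"
    by (simp add: lead_coeff_prod)
  show ?thesis
  proof (rule poly_eqI_degree_lead_coeff[where n="card Z" and A=Z])
    show "coeff g (card Z) = coeff (smult (coeff g (card Z)) (\<Prod>z\<in>Z. [:-z,1:])) (card Z)"
      using l d by simp
    show "degree (smult (coeff g (card Z)) (\<Prod>z\<in>Z. [:- z, 1:])) \<le> card Z"
      using d by (metis degree_smult_le)
    show "\<And>z. z \<in> Z \<Longrightarrow> poly g z = poly (smult (coeff g (card Z)) (\<Prod>z\<in>Z. [:- z, 1:])) z"
      using assms(1,3) by (auto simp: poly_prod)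
  qed (use assms in auto)
qed

lemma zero_of_roots:
  fixes g :: "'a::field poly"
  assumes "finite Z" "degree g < card Z" "\<forall>z\<in>Z. poly g z = 0"
  shows "g = 0"
  using poly_eqI_degree[of Z g 0] assms by auto

lemma transfer:
  fixes C D :: "'a::field list set"
  assumes gr: "is_GRS_code N k' D" and me: "monomially_equivalent N C D"
  shows "\<exists>\<gamma> \<mu>. inj_on \<gamma> {..<N} \<and> (\<forall>i<N. \<mu> i \<noteq> 0) \<and>
     (\<forall>c\<in>C. \<exists>g. (g = 0 \<or> degree g < k') \<and> (\<forall>i<N. c!i = \<mu> i * poly g (\<gamma> i))) \<and>
     (\<forall>g. (g = 0 \<or> degree g < k') \<longrightarrow> (\<exists>c\<in>C. \<forall>i<N. c!i = \<mu> i * poly g (\<gamma> i)))"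
proof -
  obtain \<beta> w where bi: "inj_on \<beta> {..<N}" and w0: "\<forall>i<N. w i \<noteq> 0" and DG: "D = GRS_code N k' \<beta> w"
    using gr unfolding is_GRS_code_def by blast
  obtain \<sigma> lam where sp: "\<sigma> permutes {..<N}" and l0: "\<forall>j<N. lam j \<noteq> 0"
      and DA: "D = monomial_act N \<sigma> lam ` C"
    using me unfolding monomially_equivalent_def by blast
  define \<tau> where "\<tau> = inv \<sigma>"
  have tp: "\<tau> permutes {..<N}" using sp permutes_inv \<tau>_def by blast
  have st: "\<And>i. \<sigma> (\<tau> i) = i" using sp permutes_inverses(1) \<tau>_def by fastforce
  have tN: "\<And>i. i < N \<Longrightarrow> \<tau> i < N" using tp permutes_in_image by fastforce
  define \<gamma> where "\<gamma> i = \<beta> (\<tau> i)" for i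
  define \<mu> where "\<mu> i = w (\<tau> i) / lam (\<tau> i)" for i
  have key: "\<And>c g. monomial_act N \<sigma> lam c = map (\<lambda>i. w i * poly g (\<beta> i)) [0..<N] \<Longrightarrow>
        \<forall>i<N. c!i = \<mu> i * poly g (\<gamma> i)"
  proof (intro allI impI)
    fix c g i assume h: "monomial_act N \<sigma> lam c = map (\<lambda>i. w i * poly g (\<beta> i)) [0..<N]" and i: "i < N"
    have "monomial_act N \<sigma> lam c ! (\<tau> i) = map (\<lambda>i. w i * poly g (\<beta> i)) [0..<N] ! (\<tau> i)"
      using h by simp
    hence "lam (\<tau> i) * c ! i = w (\<tau> i) * poly g (\<beta> (\<tau> i))"
      using tN[OF i] st by (simp add: monomial_act_def)
    thus "c!i = \<mu> i * poly g (\<gamma> i)"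
      using l0 tN[OF i] by (simp add: \<mu>_def \<gamma>_def field_simps)
  qed
  have "inj_on \<gamma> {..<N}"
  proof (rule inj_onI)
    fix x y assume x: "x \<in> {..<N}" and y: "y \<in> {..<N}" and e: "\<gamma> x = \<gamma> y"
    have "\<tau> x = \<tau> y" using e x y tN bi unfolding \<gamma>_def inj_on_def by auto
    hence "\<sigma> (\<tau> x) = \<sigma> (\<tau> y)" by simp
    thus "x = y" using st by simp
  qed
  moreover have "\<forall>i<N. \<mu> i \<noteq> 0" using w0 l0 tN by (simp add: \<mu>_def)
  moreover have "\<forall>c\<in>C. \<exists>g. (g = 0 \<or> degree g < k') \<and> (\<forall>i<N. c!i = \<mu> i * poly g (\<gamma> i))"
  proof
    fix c assume "c \<in> C"
    hence "monomial_act N \<sigma> lam c \<in> GRS_code N k' \<beta> w" using DA DG by auto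
    then obtain g where "g = 0 \<or> degree g < k'" "monomial_act N \<sigma> lam c = map (\<lambda>i. w i * poly g (\<beta> i)) [0..<N]"
      unfolding GRS_code_def by blast
    thus "\<exists>g. (g = 0 \<or> degree g < k') \<and> (\<forall>i<N. c!i = \<mu> i * poly g (\<gamma> i))" using key by blast
  qed
  moreover have "\<forall>g. (g = 0 \<or> degree g < k') \<longrightarrow> (\<exists>c\<in>C. \<forall>i<N. c!i = \<mu> i * poly g (\<gamma> i))"
  proof (intro allI impI)
    fix g :: "'a poly" assume "g = 0 \<or> degree g < k'"
    hence "map (\<lambda>i. w i * poly g (\<beta> i)) [0..<N] \<in> D" unfolding DG GRS_code_def by blast
    then obtain c where "c \<in> C" "monomial_act N \<sigma> lam c = map (\<lambda>i. w i * poly g (\<beta> i)) [0..<N]"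
      using DA by auto
    thus "\<exists>c\<in>C. \<forall>i<N. c!i = \<mu> i * poly g (\<gamma> i)" using key by blast
  qed
  ultimately show ?thesis by blast
qed


definition cw :: "nat \<Rightarrow> nat \<Rightarrow> (nat \<Rightarrow> 'a::field) \<Rightarrow> (nat \<Rightarrow> 'a) \<Rightarrow> 'a \<Rightarrow> 'a \<Rightarrow> (nat \<Rightarrow> 'a) \<Rightarrow> 'a list" where
  "cw n k alpha v eta delta fc = map (\<lambda>i. v i * poly (S_poly k eta fc) (alpha i)) [0..<n]
        @ [fc (k - 1), fc (k - 2), fc (k - 3) + delta * fc (k - 1)]"

lemma code_C_cw: "code_C n k alpha v eta delta = range (cw n k alpha v eta delta)"
  unfolding code_C_def cw_def by auto

lemma cw_nth:
  "i < n \<Longrightarrow> cw n k alpha v eta delta fc ! i = v i * poly (S_poly k eta fc) (alpha i)"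
  "cw n k alpha v eta delta fc ! n = fc (k - 1)"
  "cw n k alpha v eta delta fc ! (n + 1) = fc (k - 2)"
  "cw n k alpha v eta delta fc ! (n + 2) = fc (k - 3) + delta * fc (k - 1)"
  unfolding cw_def by (auto simp: nth_append)

lemma S_coeff:
  fixes f :: "'a::field poly"
  assumes "degree f \<le> k - 2" "2 \<le> k"
  shows "S_poly k eta (coeff f) = f"
proof -
  have c: "coeff f (k - 1) = 0" using assms by (intro coeff_eq_0) auto
  have "{..<k} = {..k - 1}" using assms by auto
  hence "(\<Sum>i<k. monom (coeff f i) i) = f" using assms by (simp add: poly_as_sum_of_monoms')
  thus ?thesis unfolding S_poly_def using c by simp
qed

lemma prod_ui:
  assumes "finite Z1" "finite Z2" "finite Z3" "finite Z4" "Z1 \<union> Z2 = Z3 \<union> Z4" "Z1 \<inter> Z2 = Z3 \<inter> Z4"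
  shows "prod h Z1 * prod h Z2 = prod h Z3 * (prod h Z4 :: 'b::comm_monoid_mult)"
  using prod.union_inter[of Z1 Z2 h] prod.union_inter[of Z3 Z4 h] assms by simp

lemma S3_poly:
  fixes eta c x :: "'a::field"
  shows "poly (S_poly 3 eta (\<lambda>i. if i = 2 then 1 else if i = 0 then c else 0)) x = x^2 + eta * x^5 + c"
  unfolding S_poly_def by (simp add: numeral_3_eq_3 poly_monom algebra_simps eval_nat_numeral)

lemma aux_cancel:
  fixes b X K L :: "'a::field"
  assumes "b * X * K = L * X" "X \<noteq> 0"
  shows "b * K = L"
proof -
  have "X * (b * K) = X * L" using assms(1) by (simp add: mult_ac)
  thus ?thesis using assms(2) by simp
qed

theorem theorem7:
  fixes alpha v :: "nat \<Rightarrow> 'a::{finite,field}"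
    and eta delta :: 'a
    and n k :: nat
  assumes "3 \<le> k" "k \<le> n" "n \<le> card (UNIV :: 'a set)"
    and "inj_on alpha {..<n}"
    and "\<forall>i<n. v i \<noteq> 0"
    and "eta \<noteq> 0"
    and "k + 4 \<le> n"
  shows "\<not> (\<exists>k' D. is_GRS_code (n + 3) k' D \<and>
                 monomially_equivalent (n + 3) (code_C n k alpha v eta delta) D)"
proof
  note k3 = assms(1) and ai = assms(4) and v0 = assms(5) and e0 = assms(6) and kn = assms(7)
  assume "\<exists>k' D. is_GRS_code (n + 3) k' D \<and>
                 monomially_equivalent (n + 3) (code_C n k alpha v eta delta) D"
  then obtain k' D where gr: "is_GRS_code (n + 3) k' D"
    and me: "monomially_equivalent (n + 3) (code_C n k alpha v eta delta) D" by blast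
  define W where "W = cw n k alpha v eta delta"
  have CW: "code_C n k alpha v eta delta = range W" using code_C_cw W_def by simp
  obtain \<gamma> \<mu> where gi: "inj_on \<gamma> {..<n+3}" and m0: "\<forall>i<n+3. \<mu> i \<noteq> 0"
     and rep0: "\<forall>c\<in>range W. \<exists>g. (g = 0 \<or> degree g < k') \<and> (\<forall>i<n+3. c!i = \<mu> i * poly g (\<gamma> i))"
     and sur0: "\<forall>g. (g = 0 \<or> degree g < k') \<longrightarrow> (\<exists>c\<in>range W. \<forall>i<n+3. c!i = \<mu> i * poly g (\<gamma> i))"
    using transfer[OF gr me] unfolding CW by blast
  have rep: "\<And>fc. \<exists>g. (g = 0 \<or> degree g < k') \<and> (\<forall>i<n+3. W fc ! i = \<mu> i * poly g (\<gamma> i))"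
    using rep0 by blast
  have sur: "\<And>g. g = 0 \<or> degree g < k' \<Longrightarrow> \<exists>fc. \<forall>i<n+3. W fc ! i = \<mu> i * poly g (\<gamma> i)"
    using sur0 by blast
  have Wa: "\<And>fc i. i < n \<Longrightarrow> W fc ! i = v i * poly (S_poly k eta fc) (alpha i)"
    and WP: "\<And>fc. W fc ! n = fc (k - 1)"
    and WQ: "\<And>fc. W fc ! (n + 1) = fc (k - 2)"
    and WR: "\<And>fc. W fc ! (n + 2) = fc (k - 3) + delta * fc (k - 1)"
    unfolding W_def by (simp_all add: cw_def nth_append)
  have kk: "k' \<le> k"
  proof (rule ccontr)
    assume nk: "\<not> k' \<le> k"
    define Y where "Y = insert n (insert (n+1) (insert (n+2) {..<k-3}))"
    have fY: "finite Y" by (simp add: Y_def)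
    have Ys: "Y \<subseteq> {..<n+3}" using kn by (auto simp: Y_def)
    have cY: "card Y = k" using kn k3 by (simp add: Y_def)
    define g where "g = (\<Prod>y\<in>Y. [:-\<gamma> y, 1:])"
    have dg: "degree g = k" unfolding g_def
      by (subst degree_prod_eq_sum_degree) (auto simp: cY)
    obtain fc where fc: "\<forall>i<n+3. W fc ! i = \<mu> i * poly g (\<gamma> i)" using sur[of g] dg nk by auto
    have gz: "\<And>y. y \<in> Y \<Longrightarrow> poly g (\<gamma> y) = 0"
      using fY by (auto simp: g_def poly_prod prod_zero_iff)
    have Wz: "\<And>y. y \<in> Y \<Longrightarrow> W fc ! y = 0"
    proof -
      fix y assume y: "y \<in> Y"
      hence "y < n + 3" using Ys by auto
      thus "W fc ! y = 0" using fc gz[OF y] by simp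
    qed
    have f1: "fc (k-1) = 0" using Wz[of n] WP by (simp add: Y_def)
    have f2: "fc (k-2) = 0" using Wz[of "n+1"] WQ by (simp add: Y_def)
    have f3: "fc (k-3) = 0" using Wz[of "n+2"] WR f1 by (simp add: Y_def)
    obtain m where km: "k = m + 3" using k3 by (metis add.commute le_Suc_ex)
    have Sp: "S_poly k eta fc = (\<Sum>i<m. monom (fc i) i)"
      using f1 f2 f3 unfolding S_poly_def km by (simp add: numeral_eq_Suc)
    have S0: "S_poly k eta fc = 0"
    proof (cases "m = 0")
      case True thus ?thesis using Sp by simp
    next
      case False
      have ij: "inj_on alpha {..<m}" using ai km kn by (auto intro: inj_on_subset)
      show ?thesis
      proof (rule zero_of_roots[of "alpha ` {..<m}"])
        show "finite (alpha ` {..<m})" by simp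
        show "degree (S_poly k eta fc) < card (alpha ` {..<m})"
          unfolding Sp card_image[OF ij] using False
          by (intro degree_sum_less) (auto intro: le_less_trans[OF degree_monom_le])
        show "\<forall>z\<in>alpha ` {..<m}. poly (S_poly k eta fc) z = 0"
        proof
          fix z assume "z \<in> alpha ` {..<m}"
          then obtain j where j: "j < m" "z = alpha j" by auto
          have "j \<in> Y" using j km by (auto simp: Y_def)
          hence "W fc ! j = 0" by (rule Wz)
          moreover have "j < n" using j km kn by auto
          ultimately show "poly (S_poly k eta fc) z = 0" using Wa[of j fc] v0 j by simp
        qed
      qed
    qed
    have mn: "m < n" using km kn by auto
    have "m \<notin> Y" using km kn by (auto simp: Y_def)
    have "\<forall>y\<in>Y. \<gamma> m \<noteq> \<gamma> y"
    proof
      fix y assume y: "y \<in> Y"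
      hence "y < n + 3" "y \<noteq> m" using Ys \<open>m \<notin> Y\<close> by auto
      thus "\<gamma> m \<noteq> \<gamma> y" using gi mn unfolding inj_on_def by auto
    qed
    hence "poly g (\<gamma> m) \<noteq> 0"
      using fY by (simp add: g_def poly_prod prod_zero_iff)
    moreover have "W fc ! m = 0" using Wa[OF mn] S0 by simp
    ultimately show False using fc m0 mn by auto
  qed
  have Kform: "\<And>fc Z. Z \<subseteq> {..<n+3} \<Longrightarrow> card Z = k - 1 \<Longrightarrow> \<forall>z\<in>Z. W fc ! z = 0 \<Longrightarrow>
      \<exists>K. \<forall>i<n+3. W fc ! i = K * \<mu> i * (\<Prod>z\<in>Z. \<gamma> i - \<gamma> z)"
  proof -
    fix fc Z assume Zs: "Z \<subseteq> {..<n+3}" and cZ: "card Z = k - 1" and z0: "\<forall>z\<in>Z. W fc ! z = 0"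
    obtain g where g: "g = 0 \<or> degree g < k'" "\<forall>i<n+3. W fc ! i = \<mu> i * poly g (\<gamma> i)"
      using rep by blast
    have fZ: "finite Z" using Zs finite_subset by blast
    have ij: "inj_on \<gamma> Z" using gi Zs inj_on_subset by blast
    have cg: "card (\<gamma> ` Z) = k - 1" using card_image[OF ij] cZ by simp
    have dg: "degree g \<le> card (\<gamma> ` Z)" using g(1) kk cg k3 by auto
    have r: "\<forall>w\<in>\<gamma> ` Z. poly g w = 0"
    proof
      fix w assume "w \<in> \<gamma> ` Z"
      then obtain z where z: "z \<in> Z" "w = \<gamma> z" by blast
      have "z < n + 3" using z Zs by auto
      hence "\<mu> z * poly g (\<gamma> z) = 0" using g(2) z0 z by metis
      thus "poly g w = 0" using m0 \<open>z < n + 3\<close> z by simp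
    qed
    have geq: "g = smult (coeff g (card (\<gamma>`Z))) (\<Prod>w\<in>\<gamma>`Z. [:-w,1:])"
      by (rule prod_form) (use fZ dg r in auto)
    show "\<exists>K. \<forall>i<n+3. W fc ! i = K * \<mu> i * (\<Prod>z\<in>Z. \<gamma> i - \<gamma> z)"
    proof (intro exI allI impI)
      fix i assume i: "i < n + 3"
      have "poly g (\<gamma> i) = coeff g (card (\<gamma>`Z)) * (\<Prod>w\<in>\<gamma>`Z. \<gamma> i - w)"
        by (subst geq) (simp add: poly_prod)
      also have "(\<Prod>w\<in>\<gamma>`Z. \<gamma> i - w) = (\<Prod>z\<in>Z. \<gamma> i - \<gamma> z)"
        using prod.reindex[OF ij, of "\<lambda>w. \<gamma> i - w"] by simp
      finally show "W fc ! i = coeff g (card (\<gamma>`Z)) * \<mu> i * (\<Prod>z\<in>Z. \<gamma> i - \<gamma> z)"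
        using g(2) i by simp
    qed
  qed
  have comb: "\<And>fc1 fc2 fc3 fc4 Z1 Z2 Z3 Z4.
      Z1 \<subseteq> {..<n+3} \<Longrightarrow> card Z1 = k - 1 \<Longrightarrow> \<forall>z\<in>Z1. W fc1 ! z = 0 \<Longrightarrow>
      Z2 \<subseteq> {..<n+3} \<Longrightarrow> card Z2 = k - 1 \<Longrightarrow> \<forall>z\<in>Z2. W fc2 ! z = 0 \<Longrightarrow>
      Z3 \<subseteq> {..<n+3} \<Longrightarrow> card Z3 = k - 1 \<Longrightarrow> \<forall>z\<in>Z3. W fc3 ! z = 0 \<Longrightarrow>
      Z4 \<subseteq> {..<n+3} \<Longrightarrow> card Z4 = k - 1 \<Longrightarrow> \<forall>z\<in>Z4. W fc4 ! z = 0 \<Longrightarrow>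
      Z1 \<union> Z2 = Z3 \<union> Z4 \<Longrightarrow> Z1 \<inter> Z2 = Z3 \<inter> Z4 \<Longrightarrow>
      (\<exists>i<n+3. W fc3 ! i \<noteq> 0) \<Longrightarrow> (\<exists>i<n+3. W fc4 ! i \<noteq> 0) \<Longrightarrow>
      \<exists>K12 K34. K34 \<noteq> 0 \<and> (\<forall>i<n+3. W fc1 ! i * W fc2 ! i * K34 = K12 * (W fc3 ! i * W fc4 ! i))"
  proof -
    fix fc1 fc2 fc3 fc4 Z1 Z2 Z3 Z4
    assume a1: "Z1 \<subseteq> {..<n+3}" "card Z1 = k - 1" "\<forall>z\<in>Z1. W fc1 ! z = 0"
      and a2: "Z2 \<subseteq> {..<n+3}" "card Z2 = k - 1" "\<forall>z\<in>Z2. W fc2 ! z = 0"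
      and a3: "Z3 \<subseteq> {..<n+3}" "card Z3 = k - 1" "\<forall>z\<in>Z3. W fc3 ! z = 0"
      and a4: "Z4 \<subseteq> {..<n+3}" "card Z4 = k - 1" "\<forall>z\<in>Z4. W fc4 ! z = 0"
      and u: "Z1 \<union> Z2 = Z3 \<union> Z4" and it: "Z1 \<inter> Z2 = Z3 \<inter> Z4"
      and n3: "\<exists>i<n+3. W fc3 ! i \<noteq> 0" and n4: "\<exists>i<n+3. W fc4 ! i \<noteq> 0"
    obtain K1 where K1: "\<forall>i<n+3. W fc1 ! i = K1 * \<mu> i * (\<Prod>z\<in>Z1. \<gamma> i - \<gamma> z)"
      using Kform[OF a1] by blast
    obtain K2 where K2: "\<forall>i<n+3. W fc2 ! i = K2 * \<mu> i * (\<Prod>z\<in>Z2. \<gamma> i - \<gamma> z)"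
      using Kform[OF a2] by blast
    obtain K3 where K3: "\<forall>i<n+3. W fc3 ! i = K3 * \<mu> i * (\<Prod>z\<in>Z3. \<gamma> i - \<gamma> z)"
      using Kform[OF a3] by blast
    obtain K4 where K4: "\<forall>i<n+3. W fc4 ! i = K4 * \<mu> i * (\<Prod>z\<in>Z4. \<gamma> i - \<gamma> z)"
      using Kform[OF a4] by blast
    have "K3 \<noteq> 0" using n3 K3 by force
    moreover have "K4 \<noteq> 0" using n4 K4 by force
    moreover have "\<forall>i<n+3. W fc1 ! i * W fc2 ! i * (K3 * K4) = (K1 * K2) * (W fc3 ! i * W fc4 ! i)"
    proof (intro allI impI)
      fix i assume i: "i < n + 3"
      have f: "finite Z1" "finite Z2" "finite Z3" "finite Z4"
        using a1 a2 a3 a4 finite_subset by blast+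
      have pe: "(\<Prod>z\<in>Z1. \<gamma> i - \<gamma> z) * (\<Prod>z\<in>Z2. \<gamma> i - \<gamma> z)
              = (\<Prod>z\<in>Z3. \<gamma> i - \<gamma> z) * (\<Prod>z\<in>Z4. \<gamma> i - \<gamma> z)"
        by (rule prod_ui[OF f u it])
      show "W fc1 ! i * W fc2 ! i * (K3 * K4) = (K1 * K2) * (W fc3 ! i * W fc4 ! i)"
        using K1 K2 K3 K4 i pe by (simp add: algebra_simps)
    qed
    ultimately show "\<exists>K12 K34. K34 \<noteq> 0 \<and> (\<forall>i<n+3. W fc1 ! i * W fc2 ! i * K34 = K12 * (W fc3 ! i * W fc4 ! i))"
      by (metis mult_eq_0_iff)
  qed
  define pr where "pr T = (\<Prod>t\<in>T. [:-alpha t, 1:])" for T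
  have prdeg: "\<And>T. finite T \<Longrightarrow> degree (pr T) = card T"
    unfolding pr_def by (subst degree_prod_eq_sum_degree) auto
  have prlc: "\<And>T. finite T \<Longrightarrow> coeff (pr T) (card T) = 1"
  proof -
    fix T :: "nat set" assume fT: "finite T"
    have "coeff (pr T) (card T) = lead_coeff (pr T)" using prdeg[OF fT] by simp
    also have "\<dots> = 1" by (simp add: pr_def lead_coeff_prod)
    finally show "coeff (pr T) (card T) = 1" .
  qed
  have prpoly: "\<And>T x. poly (pr T) x = (\<Prod>t\<in>T. x - alpha t)"
    unfolding pr_def by (simp add: poly_prod)
  have prz: "\<And>T t. finite T \<Longrightarrow> t \<in> T \<Longrightarrow> poly (pr T) (alpha t) = 0"
    unfolding prpoly by (auto simp: prod_zero_iff)
  have prnz: "\<And>T i. T \<subseteq> {..<n} \<Longrightarrow> i < n \<Longrightarrow> i \<notin> T \<Longrightarrow> poly (pr T) (alpha i) \<noteq> 0"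
  proof -
    fix T i assume T: "T \<subseteq> {..<n}" and i: "i < n" "i \<notin> T"
    have "finite T" using T finite_subset by blast
    moreover have "\<forall>t\<in>T. alpha i \<noteq> alpha t" using T i ai unfolding inj_on_def by auto
    ultimately show "poly (pr T) (alpha i) \<noteq> 0" unfolding prpoly by (simp add: prod_zero_iff)
  qed
  show False
  proof (cases "k = 3")
    case True
    note k3e = True
    define u where "u x = x^2 + eta * x^5" for x :: 'a
    define g2 where "g2 = (\<lambda>i::nat. if i = 2 then (1::'a) else if i = 0 then - u (alpha 1) else 0)"
    define g4 where "g4 = (\<lambda>i::nat. if i = 2 then (1::'a) else if i = 0 then - u (alpha 0) else 0)"
    define fc1 where "fc1 = coeff [:-alpha 0, 1:]"
    define fc3 where "fc3 = coeff [:-alpha 1, 1:]"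
    have Sg2: "\<And>x. poly (S_poly k eta g2) x = u x - u (alpha 1)"
      using S3_poly[of eta "- u (alpha 1)" x for x] k3e unfolding g2_def by (simp add: u_def)
    have Sg4: "\<And>x. poly (S_poly k eta g4) x = u x - u (alpha 0)"
      using S3_poly[of eta "- u (alpha 0)" x for x] k3e unfolding g4_def by (simp add: u_def)
    have S1: "S_poly k eta fc1 = [:-alpha 0, 1:]" unfolding fc1_def using S_coeff[of "[:-alpha 0, 1:]" k] k3e by simp
    have S3: "S_poly k eta fc3 = [:-alpha 1, 1:]" unfolding fc3_def using S_coeff[of "[:-alpha 1, 1:]" k] k3e by simp
    have n7: "7 \<le> n" using kn k3e by simp
    have a01: "alpha 0 \<noteq> alpha 1" using ai n7 unfolding inj_on_def by force
    define Z1 where "Z1 = {n, 0::nat}"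
    define Z2 where "Z2 = {n+1, 1::nat}"
    define Z3 where "Z3 = {n, 1::nat}"
    define Z4 where "Z4 = {n+1, 0::nat}"
    have Zs: "Z1 \<subseteq> {..<n+3}" "Z2 \<subseteq> {..<n+3}" "Z3 \<subseteq> {..<n+3}" "Z4 \<subseteq> {..<n+3}"
      using n7 by (auto simp: Z1_def Z2_def Z3_def Z4_def)
    have cZ: "card Z1 = k - 1" "card Z2 = k - 1" "card Z3 = k - 1" "card Z4 = k - 1"
      using n7 k3e by (auto simp: Z1_def Z2_def Z3_def Z4_def)
    have z1: "\<forall>z\<in>Z1. W fc1 ! z = 0"
      using WP Wa[of 0 fc1] S1 n7 k3e by (auto simp: Z1_def fc1_def numeral_2_eq_2)
    have z2: "\<forall>z\<in>Z2. W g2 ! z = 0"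
      using WQ Wa[of 1 g2] Sg2 n7 k3e by (auto simp: Z2_def g2_def)
    have z3: "\<forall>z\<in>Z3. W fc3 ! z = 0"
      using WP Wa[of 1 fc3] S3 n7 k3e by (auto simp: Z3_def fc3_def numeral_2_eq_2)
    have z4: "\<forall>z\<in>Z4. W g4 ! z = 0"
      using WQ Wa[of 0 g4] Sg4 n7 k3e by (auto simp: Z4_def g4_def)
    have un: "Z1 \<union> Z2 = Z3 \<union> Z4" by (auto simp: Z1_def Z2_def Z3_def Z4_def)
    have it: "Z1 \<inter> Z2 = Z3 \<inter> Z4" using n7 by (auto simp: Z1_def Z2_def Z3_def Z4_def)
    have ex3: "\<exists>i<n+3. W fc3 ! i \<noteq> 0"
      using Wa[of 0 fc3] S3 n7 v0 a01 by (intro exI[of _ 0]) auto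
    have ex4: "\<exists>i<n+3. W g4 ! i \<noteq> 0"
      using WP k3e by (intro exI[of _ n]) (auto simp: g4_def)
    obtain K12 K34 where K34: "K34 \<noteq> 0" and id: "\<forall>i<n+3. W fc1 ! i * W g2 ! i * K34
        = K12 * (W fc3 ! i * W g4 ! i)"
      using comb[OF Zs(1) cZ(1) z1 Zs(2) cZ(2) z2 Zs(3) cZ(3) z3 Zs(4) cZ(4) z4 un it ex3 ex4] by blast
    define U1 where "U1 = [:- u (alpha 1), 0, 1, 0, 0, eta:]"
    define U0 where "U0 = [:- u (alpha 0), 0, 1, 0, 0, eta:]"
    have pU1: "\<And>x. poly U1 x = u x - u (alpha 1)" by (simp add: U1_def u_def algebra_simps power2_eq_square power_numeral_reduce)
    have pU0: "\<And>x. poly U0 x = u x - u (alpha 0)" by (simp add: U0_def u_def algebra_simps power2_eq_square power_numeral_reduce)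
    define p where "p = smult K34 ([:-alpha 0, 1:] * U1) - smult K12 ([:-alpha 1, 1:] * U0)"
    have rt: "\<forall>z\<in>alpha ` {..<n}. poly p z = 0"
    proof
      fix z assume "z \<in> alpha ` {..<n}"
      then obtain i where i: "i < n" "z = alpha i" by auto
      have "W fc1 ! i * W g2 ! i * K34 = K12 * (W fc3 ! i * W g4 ! i)" using id i by simp
      hence "(v i * v i) * ((alpha i - alpha 0) * (u (alpha i) - u (alpha 1)) * K34)
           = (v i * v i) * (K12 * ((alpha i - alpha 1) * (u (alpha i) - u (alpha 0))))"
        using Wa[OF i(1)] S1 S3 Sg2 Sg4 by (simp add: mult_ac)
      hence "(alpha i - alpha 0) * (u (alpha i) - u (alpha 1)) * K34
           = K12 * ((alpha i - alpha 1) * (u (alpha i) - u (alpha 0)))"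
        using v0 i by simp
      moreover have "poly p z = K34 * ((alpha i - alpha 0) * (u (alpha i) - u (alpha 1)))
          - K12 * ((alpha i - alpha 1) * (u (alpha i) - u (alpha 0)))"
        unfolding p_def i(2) by (simp only: poly_diff poly_smult poly_mult pU0 pU1 poly_pCons) simp
      ultimately show "poly p z = 0" by (simp add: mult_ac)
    qed
    have dU1: "degree U1 \<le> 5" using e0 by (simp add: U1_def)
    have dU0: "degree U0 \<le> 5" using e0 by (simp add: U0_def)
    have dm1: "degree ([:-alpha 0, 1:] * U1) \<le> 6"
      using degree_mult_le[of "[:-alpha 0, 1:]" U1] dU1 by simp
    have dm0: "degree ([:-alpha 1, 1:] * U0) \<le> 6"
      using degree_mult_le[of "[:-alpha 1, 1:]" U0] dU0 by simp
    have dp: "degree p \<le> 6" unfolding p_def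
      by (rule degree_diff_le; rule order_trans[OF degree_smult_le]) (use dm1 dm0 in auto)
    have "p = 0"
    proof (rule zero_of_roots[OF _ _ rt])
      have "card (alpha ` {..<n}) = n" using card_image[OF ai] by simp
      thus "degree p < card (alpha ` {..<n})" using dp n7 by simp
    qed simp
    hence c6: "coeff p 6 = 0" and c5: "coeff p 5 = 0" by simp_all
    have "K34 * eta - K12 * eta = 0" using c6 unfolding p_def U1_def U0_def by (simp add: numeral_eq_Suc)
    moreover have "K34 * (- alpha 0 * eta) - K12 * (- alpha 1 * eta) = 0" using c5 unfolding p_def U1_def U0_def by (simp add: numeral_eq_Suc)
    ultimately have h1: "(K34 - K12) * eta = 0" and h2: "K34 * (- alpha 0 * eta) - K12 * (- alpha 1 * eta) = 0"
      by (simp_all add: left_diff_distrib)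
    have "K12 = K34" using h1 e0 by simp
    hence "(K34 * eta) * (alpha 1 - alpha 0) = 0" using h2 by (simp add: algebra_simps)
    thus False using K34 e0 a01 by simp
  next
    case False
    hence k4: "4 \<le> k" using k3 by simp
    define T1 where "T1 = {..<k-3}"
    define T2 where "T2 = insert (k-3) {..<k-4}"
    define T3 where "T3 = {..<k-2}"
    define T4 where "T4 = {..<k-4}"
    have fT: "finite T1" "finite T2" "finite T3" "finite T4" by (simp_all add: T1_def T2_def T3_def T4_def)
    have cT: "card T1 = k - 3" "card T2 = k - 3" "card T3 = k - 2" "card T4 = k - 4"
      using k4 by (simp_all add: T1_def T2_def T3_def T4_def)
    define sc where "sc = coeff (pr T2) (k-4)"
    define f2 where "f2 = pr T2 * [:-sc, 1:]"
    have d1: "degree (pr T1) \<le> k - 2" using prdeg fT cT by simp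
    have d3: "degree (pr T3) \<le> k - 2" using prdeg fT cT by simp
    have d4: "degree (pr T4) \<le> k - 2" using prdeg fT cT by simp
    have pr2nz: "pr T2 \<noteq> 0" using prlc[OF fT(2)] by auto
    have d2: "degree f2 = k - 2" unfolding f2_def using pr2nz prdeg[OF fT(2)] cT k4
      by (subst degree_mult_eq) auto
    have f2alt: "f2 = smult (-sc) (pr T2) + pCons 0 (pr T2)"
      unfolding f2_def by (simp add: mult.commute)
    have c2: "coeff f2 (k-3) = 0"
    proof -
      have e: "k - 3 = Suc (k - 4)" using k4 by simp
      have "coeff (pr T2) (k-3) = 1" using prlc[OF fT(2)] cT by simp
      moreover have "coeff (pCons 0 (pr T2)) (k-3) = coeff (pr T2) (k-4)" using k4 by (simp add: coeff_pCons')
      ultimately show ?thesis unfolding f2alt by (simp add: sc_def)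
    qed
    have S1: "S_poly k eta (coeff (pr T1)) = pr T1" using S_coeff[OF d1] k4 by simp
    have S2: "S_poly k eta (coeff f2) = f2" using S_coeff[of f2 k] d2 k4 by simp
    have S3: "S_poly k eta (coeff (pr T3)) = pr T3" using S_coeff[OF d3] k4 by simp
    have S4: "S_poly k eta (coeff (pr T4)) = pr T4" using S_coeff[OF d4] k4 by simp
    have hi: "\<And>p j. degree p < j \<Longrightarrow> coeff p j = 0" by (simp add: coeff_eq_0)
    define Z1 where "Z1 = insert n (insert (n+1) T1)"
    define Z2 where "Z2 = insert n (insert (n+2) T2)"
    define Z3 where "Z3 = insert n T3"
    define Z4 where "Z4 = insert n (insert (n+1) (insert (n+2) T4))"
    have Tn: "T1 \<subseteq> {..<n}" "T2 \<subseteq> {..<n}" "T3 \<subseteq> {..<n}" "T4 \<subseteq> {..<n}"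
      using kn by (auto simp: T1_def T2_def T3_def T4_def)
    have Zs: "Z1 \<subseteq> {..<n+3}" "Z2 \<subseteq> {..<n+3}" "Z3 \<subseteq> {..<n+3}" "Z4 \<subseteq> {..<n+3}"
      using Tn by (auto simp: Z1_def Z2_def Z3_def Z4_def)
    have cZ: "card Z1 = k - 1" "card Z2 = k - 1" "card Z3 = k - 1" "card Z4 = k - 1"
      using Tn fT cT k4 by (auto simp: Z1_def Z2_def Z3_def Z4_def card_insert_if)
    have z1: "\<forall>z\<in>Z1. W (coeff (pr T1)) ! z = 0"
      using WP WQ Wa S1 prz[OF fT(1)] Tn(1) hi[of "pr T1"] prdeg[OF fT(1)] cT k4 by (auto simp: Z1_def)
    have z2: "\<forall>z\<in>Z2. W (coeff f2) ! z = 0"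
    proof -
      have "poly f2 (alpha t) = 0" if "t \<in> T2" for t
        using prz[OF fT(2) that] by (simp add: f2_def)
      thus ?thesis
        using WP WR Wa S2 c2 Tn(2) hi[of f2] d2 k4 by (auto simp: Z2_def)
    qed
    have z3: "\<forall>z\<in>Z3. W (coeff (pr T3)) ! z = 0"
      using WP Wa S3 prz[OF fT(3)] Tn(3) hi[of "pr T3"] prdeg[OF fT(3)] cT k4 by (auto simp: Z3_def)
    have z4: "\<forall>z\<in>Z4. W (coeff (pr T4)) ! z = 0"
      using WP WQ WR Wa S4 prz[OF fT(4)] Tn(4) hi[of "pr T4"] prdeg[OF fT(4)] cT k4 by (auto simp: Z4_def)
    have un: "Z1 \<union> Z2 = Z3 \<union> Z4" using k4 by (auto simp: Z1_def Z2_def Z3_def Z4_def T1_def T2_def T3_def T4_def)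
    have it: "Z1 \<inter> Z2 = Z3 \<inter> Z4" using k4 kn by (auto simp: Z1_def Z2_def Z3_def Z4_def T1_def T2_def T3_def T4_def)
    have nz: "\<And>i. k - 2 \<le> i \<Longrightarrow> i < n \<Longrightarrow> W (coeff (pr T3)) ! i * W (coeff (pr T4)) ! i \<noteq> 0"
    proof -
      fix i assume i: "k - 2 \<le> i" "i < n"
      have "i \<notin> T3" "i \<notin> T4" using i by (auto simp: T3_def T4_def)
      thus "W (coeff (pr T3)) ! i * W (coeff (pr T4)) ! i \<noteq> 0"
        using Wa[OF i(2)] S3 S4 v0 i prnz[OF Tn(3) i(2)] prnz[OF Tn(4) i(2)] by simp
    qed
    have ex3: "\<exists>i<n+3. W (coeff (pr T3)) ! i \<noteq> 0" using nz[of "k-2"] kn by (intro exI[of _ "k-2"]) auto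
    have ex4: "\<exists>i<n+3. W (coeff (pr T4)) ! i \<noteq> 0" using nz[of "k-2"] kn by (intro exI[of _ "k-2"]) auto
    obtain K12 K34 where K34: "K34 \<noteq> 0" and id: "\<forall>i<n+3. W (coeff (pr T1)) ! i * W (coeff f2) ! i * K34
        = K12 * (W (coeff (pr T3)) ! i * W (coeff (pr T4)) ! i)"
      using comb[OF Zs(1) cZ(1) z1 Zs(2) cZ(2) z2 Zs(3) cZ(3) z3 Zs(4) cZ(4) z4 un it ex3 ex4] by blast
    have T12: "T1 \<union> T2 = T3 \<union> T4" "T1 \<inter> T2 = T3 \<inter> T4"
      using k4 by (auto simp: T1_def T2_def T3_def T4_def)
    have lin: "(alpha i - sc) * K34 = K12" if i: "k - 2 \<le> i" "i < n" for i
    proof -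
      have pp: "poly (pr T1) (alpha i) * poly (pr T2) (alpha i) = poly (pr T3) (alpha i) * poly (pr T4) (alpha i)"
        unfolding prpoly by (rule prod_ui[OF fT T12])
      have "W (coeff (pr T1)) ! i * W (coeff f2) ! i = (alpha i - sc) * (W (coeff (pr T3)) ! i * W (coeff (pr T4)) ! i)"
      proof -
        have w1: "W (coeff (pr T1)) ! i = v i * poly (pr T1) (alpha i)" using Wa[OF i(2)] S1 by simp
        have w2: "W (coeff f2) ! i = v i * poly f2 (alpha i)" using Wa[OF i(2)] S2 by simp
        have w3: "W (coeff (pr T3)) ! i = v i * poly (pr T3) (alpha i)" using Wa[OF i(2)] S3 by simp
        have w4: "W (coeff (pr T4)) ! i = v i * poly (pr T4) (alpha i)" using Wa[OF i(2)] S4 by simp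
        have pf: "poly f2 (alpha i) = poly (pr T2) (alpha i) * (alpha i - sc)" by (simp add: f2_def algebra_simps)
        show ?thesis unfolding w1 w2 w3 w4 pf
          by (metis (no_types, lifting) pp mult.assoc mult.commute mult.left_commute)
      qed
      moreover have "W (coeff (pr T1)) ! i * W (coeff f2) ! i * K34
        = K12 * (W (coeff (pr T3)) ! i * W (coeff (pr T4)) ! i)" using id i by simp
      ultimately have "(alpha i - sc) * (W (coeff (pr T3)) ! i * W (coeff (pr T4)) ! i) * K34
        = K12 * (W (coeff (pr T3)) ! i * W (coeff (pr T4)) ! i)" by simp
      thus ?thesis using nz[OF i] by (rule aux_cancel)
    qed
    have "(alpha (k-2) - alpha (k-1)) * K34 = 0"
      using lin[of "k-2"] lin[of "k-1"] kn k4 by (simp add: algebra_simps)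
    hence "alpha (k-2) = alpha (k-1)" using K34 by simp
    moreover have "k - 2 \<noteq> k - 1" using k4 by simp
    moreover have "k - 2 \<in> {..<n}" "k - 1 \<in> {..<n}" using kn by auto
    ultimately show False using inj_onD[OF ai] by blast
  qed
qed

end
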